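(* Let $F|R$ be an extension of ordered fields. If there is at least one non-ball cut in $R$ that is filled in $F$, then there exists no injective map $\mathcal C(R)\to\mathcal C(F)$ that is continuous with respect to the interval topologies and compatible with restriction.
   Context: For an ordered field $K$ with canonical valuation $v$ (valuation ring the convex hull of $\mathbb Z$), a cut is a pair $(D,E)$ with $D<E$ and $D\cup E=K$; $\mathcal C(K)$ is the set of cuts, ordered by $(D_1,E_1)<(D_2,E_2)$ iff $D_1\subsetneq D_2$. The interval topology on $\mathcal C(K)$ has basic open sets the intervals $(C_1,C_2)$, $(C_1,(K,\emptyset)]$ and $[(\emptyset,K),C_2)$. For $a\in K$ and a final segment $S$ of $vK$, $B_S(a,K)=\{b\in K\mid v(a-b)\in S\cup\{\infty\}\}$ is a ball. For nonempty $A\subseteq K$, $A^+=(D,K\setminus D)$ with $D$ the smallest initial segment containing $A$, and $A^-=(K\setminus E,E)$ with $E$ the smallest final segment containing $A$. A cut is a ball cut if it is $B^+$ or $B^-$ for some ball $B$, otherwise a non-ball cut. A cut $(D,E)$ of $R$ is filled in $F$ if some $a\in F$ satisfies $D<a<E$. The restriction of a cut $(D',E')$ of $F$ is $(D'\cap R,E'\cap R)$; a map $\tilde\iota:\mathcal C(R)\to\mathcal C(F)$ is compatible with restriction if the restriction of $\tilde\iota(C)$ is $C$ for every $C$. *)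

theory Defs
  imports "HOL-Analysis.Analysis"
begin

text \<open>The canonical valuation v has valuation ring the convex hull of the integers.
  We represent v(x) for x \<noteq> 0 by its archimedean class; v(0) = \<infinity> is represented by the
  empty set (which is exactly what arch_class 0 evaluates to).\<close>

definition arch_class :: "'a::linordered_field \<Rightarrow> 'a set" where
  "arch_class x = {y. y \<noteq> 0 \<and> (\<exists>n::nat. \<bar>y\<bar> \<le> of_nat n * \<bar>x\<bar>) \<and> (\<exists>n::nat. \<bar>x\<bar> \<le> of_nat n * \<bar>y\<bar>)}"

definition value_group :: "'a::linordered_field set set" where
  "value_group = arch_class ` (UNIV - {0})"

text \<open>Order on the value group: v(x) \<le> v(y) iff y/x lies in the valuation ring.\<close>
definition val_le :: "'a::linordered_field set \<Rightarrow> 'a set \<Rightarrow> bool" where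
  "val_le V W \<longleftrightarrow> (\<exists>x y. x \<noteq> 0 \<and> y \<noteq> 0 \<and> V = arch_class x \<and> W = arch_class y
                      \<and> (\<exists>n::nat. \<bar>y\<bar> \<le> of_nat n * \<bar>x\<bar>))"

definition final_segment :: "'a::linordered_field set set \<Rightarrow> bool" where
  "final_segment S \<longleftrightarrow> S \<subseteq> value_group \<and> (\<forall>s\<in>S. \<forall>t\<in>value_group. val_le s t \<longrightarrow> t \<in> S)"

definition ball_S :: "'a set set \<Rightarrow> 'a::linordered_field \<Rightarrow> 'a set" where
  "ball_S S a = {b. a - b = 0 \<or> arch_class (a - b) \<in> S}"

definition is_ball :: "'a::linordered_field set \<Rightarrow> bool" where
  "is_ball B \<longleftrightarrow> (\<exists>a S. final_segment S \<and> B = ball_S S a)"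

type_synonym 'a cut = "'a set \<times> 'a set"

definition cuts :: "'a::linordered_field cut set" where
  "cuts = {(D, E). (\<forall>d\<in>D. \<forall>e\<in>E. d < e) \<and> D \<union> E = UNIV}"

definition cut_less :: "'a::linordered_field cut \<Rightarrow> 'a cut \<Rightarrow> bool" where
  "cut_less C1 C2 \<longleftrightarrow> fst C1 \<subset> fst C2"

definition cut_topology :: "'a::linordered_field cut topology" where
  "cut_topology = topology_generated_by
     ({{C \<in> cuts. cut_less C1 C \<and> cut_less C C2} | C1 C2. C1 \<in> cuts \<and> C2 \<in> cuts}
      \<union> {{C \<in> cuts. cut_less C1 C} | C1. C1 \<in> cuts}
      \<union> {{C \<in> cuts. cut_less C C2} | C2. C2 \<in> cuts})"

definition upper_cut :: "'a::linordered_field set \<Rightarrow> 'a cut" where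
  "upper_cut A = (let D = {x. \<exists>a\<in>A. x \<le> a} in (D, UNIV - D))"

definition lower_cut :: "'a::linordered_field set \<Rightarrow> 'a cut" where
  "lower_cut A = (let E = {x. \<exists>a\<in>A. a \<le> x} in (UNIV - E, E))"

definition ball_cut :: "'a::linordered_field cut \<Rightarrow> bool" where
  "ball_cut C \<longleftrightarrow> (\<exists>B. is_ball B \<and> (C = upper_cut B \<or> C = lower_cut B))"

text \<open>F|R is given by an order-preserving field embedding i : R \<rightarrow> F.\<close>
definition ordered_field_embedding :: "('r::linordered_field \<Rightarrow> 'f::linordered_field) \<Rightarrow> bool" where
  "ordered_field_embedding i \<longleftrightarrow>
     (\<forall>x y. i (x + y) = i x + i y) \<and> (\<forall>x y. i (x * y) = i x * i y) \<and> i 1 = 1 \<and> strict_mono i"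

definition filled_in :: "('r::linordered_field \<Rightarrow> 'f::linordered_field) \<Rightarrow> 'r cut \<Rightarrow> bool" where
  "filled_in i C \<longleftrightarrow> (\<exists>a. (\<forall>d\<in>fst C. i d < a) \<and> (\<forall>e\<in>snd C. a < i e))"

definition restrict_cut :: "('r::linordered_field \<Rightarrow> 'f::linordered_field) \<Rightarrow> 'f cut \<Rightarrow> 'r cut" where
  "restrict_cut i C = (i -` fst C, i -` snd C)"

end

theory Submission
  imports Defs
begin

abbreviation cbasis :: "'a::linordered_field cut set set" where
  "cbasis \<equiv> ({{C \<in> cuts. cut_less C1 C \<and> cut_less C C2} | C1 C2. C1 \<in> cuts \<and> C2 \<in> cuts}
      \<union> {{C \<in> cuts. cut_less C1 C} | C1. C1 \<in> cuts}
      \<union> {{C \<in> cuts. cut_less C C2} | C2. C2 \<in> cuts})"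

lemma basis_lt: "A \<in> cuts \<Longrightarrow> {C \<in> cuts. cut_less C A} \<in> (cbasis :: 'a::linordered_field cut set set)"
  by blast

lemma basis_gt: "A \<in> cuts \<Longrightarrow> {C \<in> cuts. cut_less A C} \<in> (cbasis :: 'a::linordered_field cut set set)"
  by blast

lemma cut_topology_eq: "cut_topology = topology_generated_by cbasis"
  by (simp add: cut_topology_def)

lemma bot_cut: "({}, UNIV) \<in> cuts" by (simp add: cuts_def)
lemma top_cut: "(UNIV, {}) \<in> cuts" by (simp add: cuts_def)

lemma cut_disj: "C \<in> cuts \<Longrightarrow> x \<in> fst C \<Longrightarrow> x \<in> snd C \<Longrightarrow> False"
  by (cases C) (auto simp: cuts_def)

lemma cut_cover: "C \<in> cuts \<Longrightarrow> x \<notin> fst C \<Longrightarrow> x \<in> snd C"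
  by (cases C) (auto simp: cuts_def)

lemma cut_lt: "C \<in> cuts \<Longrightarrow> x \<in> fst C \<Longrightarrow> y \<in> snd C \<Longrightarrow> x < y"
  by (cases C) (auto simp: cuts_def)

lemma topspace_cut: "topspace (cut_topology :: 'a::linordered_field cut topology) = cuts"
proof -
  have "\<Union>(cbasis :: 'a cut set set) = cuts"
  proof
    show "\<Union>(cbasis :: 'a cut set set) \<subseteq> cuts" by auto
  next
    show "cuts \<subseteq> \<Union>(cbasis :: 'a cut set set)"
    proof
      fix C :: "'a cut" assume C: "C \<in> cuts"
      show "C \<in> \<Union>cbasis"
      proof (cases "fst C = {}")
        case True
        then have "snd C = UNIV" using C cut_cover by blast
        with True have "cut_less C (UNIV, {})" by (auto simp: cut_less_def)
        then show ?thesis using C top_cut by blast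
      next
        case False
        then have "cut_less ({}, UNIV) C" by (auto simp: cut_less_def)
        then show ?thesis using C bot_cut by blast
      qed
    qed
  qed
  then show ?thesis unfolding cut_topology_eq topology_generated_by_topspace .
qed

lemma cuts_lin: "C1 \<in> cuts \<Longrightarrow> C2 \<in> cuts \<Longrightarrow> fst C1 \<subseteq> fst C2 \<or> fst C2 \<subseteq> fst C1"
proof (rule ccontr)
  assume a: "C1 \<in> cuts" "C2 \<in> cuts" "\<not> (fst C1 \<subseteq> fst C2 \<or> fst C2 \<subseteq> fst C1)"
  then obtain x y where "x \<in> fst C1" "x \<notin> fst C2" "y \<in> fst C2" "y \<notin> fst C1" by blast
  then have "x \<in> snd C2" "y \<in> snd C1" using a cut_cover by blast+
  then have "x < y" "y < x" using a cut_lt \<open>x \<in> fst C1\<close> \<open>y \<in> fst C2\<close> by blast+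
  then show False by simp
qed

lemma cl_trans: "cut_less A B \<Longrightarrow> cut_less B C \<Longrightarrow> cut_less A C"
  unfolding cut_less_def by (rule psubset_trans)

lemma cl_mono: "cut_less X A \<Longrightarrow> fst A \<subseteq> fst B \<Longrightarrow> cut_less X B"
  unfolding cut_less_def by blast

lemma gen_left:
  assumes "generate_topology_on (cbasis :: 'a::linordered_field cut set set) U"
  shows "C \<in> U \<Longrightarrow> fst C \<noteq> {} \<Longrightarrow>
    \<exists>C1\<in>cuts. cut_less C1 C \<and> (\<forall>C'\<in>cuts. cut_less C1 C' \<and> cut_less C' C \<longrightarrow> C' \<in> U)"
  using assms
proof (induction arbitrary: C)
  case Empty then show ?case by simp
next
  case (Int a b)
  from Int.prems(1) have Ca: "C \<in> a" "C \<in> b" by auto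
  obtain A where A: "A \<in> cuts" "cut_less A C" "\<forall>C'\<in>cuts. cut_less A C' \<and> cut_less C' C \<longrightarrow> C' \<in> a"
    using Int.IH(1)[OF Ca(1) Int.prems(2)] by blast
  obtain B where B: "B \<in> cuts" "cut_less B C" "\<forall>C'\<in>cuts. cut_less B C' \<and> cut_less C' C \<longrightarrow> C' \<in> b"
    using Int.IH(2)[OF Ca(2) Int.prems(2)] by blast
  from cuts_lin[OF A(1) B(1)] show ?case
  proof
    assume "fst A \<subseteq> fst B"
    then have "\<forall>C'\<in>cuts. cut_less B C' \<and> cut_less C' C \<longrightarrow> C' \<in> a \<inter> b"
      using A(3) B(3) unfolding cut_less_def by blast
    then show ?case using B(1,2) by blast
  next
    assume "fst B \<subseteq> fst A"
    then have "\<forall>C'\<in>cuts. cut_less A C' \<and> cut_less C' C \<longrightarrow> C' \<in> a \<inter> b"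
      using A(3) B(3) unfolding cut_less_def by blast
    then show ?case using A(1,2) by blast
  qed
next
  case (UN K)
  then obtain k where k: "k \<in> K" "C \<in> k" by blast
  then obtain C1 where "C1\<in>cuts" "cut_less C1 C" "\<forall>C'\<in>cuts. cut_less C1 C' \<and> cut_less C' C \<longrightarrow> C' \<in> k"
    using UN.IH UN.prems(2) by blast
  then show ?case using k(1) by blast
next
  case (Basis s)
  from Basis.hyps show ?case
  proof (elim UnE CollectE exE conjE)
    fix C1 C2 assume s: "s = {C \<in> cuts. cut_less C1 C \<and> cut_less C C2}" "C1 \<in> cuts" "C2 \<in> cuts"
    from Basis.prems(1) have h: "C \<in> cuts" "cut_less C1 C" "cut_less C C2" unfolding s(1) by simp_all
    have "\<forall>C'\<in>cuts. cut_less C1 C' \<and> cut_less C' C \<longrightarrow> C' \<in> s"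
      unfolding s(1) using h(3) cl_trans by blast
    then show ?thesis using h(2) s(2) by blast
  next
    fix C1 assume s: "s = {C \<in> cuts. cut_less C1 C}" "C1 \<in> cuts"
    from Basis.prems(1) have h: "C \<in> cuts" "cut_less C1 C" unfolding s(1) by simp_all
    have "\<forall>C'\<in>cuts. cut_less C1 C' \<and> cut_less C' C \<longrightarrow> C' \<in> s"
      unfolding s(1) by blast
    then show ?thesis using h(2) s(2) by blast
  next
    fix C2 assume s: "s = {C \<in> cuts. cut_less C C2}" "C2 \<in> cuts"
    from Basis.prems(1) have h: "C \<in> cuts" "cut_less C C2" unfolding s(1) by simp_all
    have "cut_less ({}, UNIV) C" using Basis.prems(2) unfolding cut_less_def by auto
    moreover have "\<forall>C'\<in>cuts. cut_less ({}, UNIV) C' \<and> cut_less C' C \<longrightarrow> C' \<in> s"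
      unfolding s(1) using h(2) cl_trans by blast
    ultimately show ?thesis using bot_cut by blast
  qed
qed

lemma gen_right:
  assumes "generate_topology_on (cbasis :: 'a::linordered_field cut set set) U"
  shows "C \<in> U \<Longrightarrow> snd C \<noteq> {} \<Longrightarrow>
    \<exists>C2\<in>cuts. cut_less C C2 \<and> (\<forall>C'\<in>cuts. cut_less C C' \<and> cut_less C' C2 \<longrightarrow> C' \<in> U)"
  using assms
proof (induction arbitrary: C)
  case Empty then show ?case by simp
next
  case (Int a b)
  from Int.prems(1) have Ca: "C \<in> a" "C \<in> b" by auto
  obtain A where A: "A \<in> cuts" "cut_less C A" "\<forall>C'\<in>cuts. cut_less C C' \<and> cut_less C' A \<longrightarrow> C' \<in> a"
    using Int.IH(1)[OF Ca(1) Int.prems(2)] by blast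
  obtain B where B: "B \<in> cuts" "cut_less C B" "\<forall>C'\<in>cuts. cut_less C C' \<and> cut_less C' B \<longrightarrow> C' \<in> b"
    using Int.IH(2)[OF Ca(2) Int.prems(2)] by blast
  from cuts_lin[OF A(1) B(1)] show ?case
  proof
    assume "fst A \<subseteq> fst B"
    then have "\<forall>C'\<in>cuts. cut_less C C' \<and> cut_less C' A \<longrightarrow> C' \<in> a \<inter> b"
      using A(3) B(3) cl_mono by blast
    then show ?case using A(1,2) by blast
  next
    assume "fst B \<subseteq> fst A"
    then have "\<forall>C'\<in>cuts. cut_less C C' \<and> cut_less C' B \<longrightarrow> C' \<in> a \<inter> b"
      using A(3) B(3) cl_mono by blast
    then show ?case using B(1,2) by blast
  qed
next
  case (UN K)
  then obtain k where k: "k \<in> K" "C \<in> k" by blast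
  then obtain C2 where "C2\<in>cuts" "cut_less C C2" "\<forall>C'\<in>cuts. cut_less C C' \<and> cut_less C' C2 \<longrightarrow> C' \<in> k"
    using UN.IH UN.prems(2) by blast
  then show ?case using k(1) by blast
next
  case (Basis s)
  from Basis.hyps show ?case
  proof (elim UnE CollectE exE conjE)
    fix C1 C2 assume s: "s = {C \<in> cuts. cut_less C1 C \<and> cut_less C C2}" "C1 \<in> cuts" "C2 \<in> cuts"
    from Basis.prems(1) have h: "C \<in> cuts" "cut_less C1 C" "cut_less C C2" unfolding s(1) by simp_all
    have "\<forall>C'\<in>cuts. cut_less C C' \<and> cut_less C' C2 \<longrightarrow> C' \<in> s"
      unfolding s(1) using h(2) cl_trans by blast
    then show ?thesis using h(3) s(3) by blast
  next
    fix C1 assume s: "s = {C \<in> cuts. cut_less C1 C}" "C1 \<in> cuts"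
    from Basis.prems(1) have h: "C \<in> cuts" "cut_less C1 C" unfolding s(1) by simp_all
    obtain x where "x \<in> snd C" using Basis.prems(2) by blast
    then have "x \<notin> fst C" using cut_disj[OF h(1)] by blast
    then have "cut_less C (UNIV, {})" unfolding cut_less_def by auto
    moreover have "\<forall>C'\<in>cuts. cut_less C C' \<and> cut_less C' (UNIV, {}) \<longrightarrow> C' \<in> s"
      unfolding s(1) using h(2) cl_trans by blast
    ultimately show ?thesis using top_cut by blast
  next
    fix C2 assume s: "s = {C \<in> cuts. cut_less C C2}" "C2 \<in> cuts"
    from Basis.prems(1) have h: "C \<in> cuts" "cut_less C C2" unfolding s(1) by simp_all
    have "\<forall>C'\<in>cuts. cut_less C C' \<and> cut_less C' C2 \<longrightarrow> C' \<in> s"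
      unfolding s(1) by blast
    then show ?thesis using h(2) s(2) by blast
  qed
qed

lemma final_value_group: "final_segment (value_group :: 'a::linordered_field set set)"
  by (simp add: final_segment_def)

lemma ball_UNIV: "is_ball (UNIV :: 'a::linordered_field set)"
proof -
  have "ball_S value_group (0::'a) = UNIV"
  proof (rule set_eqI)
    fix b :: 'a
    show "b \<in> ball_S value_group 0 \<longleftrightarrow> b \<in> UNIV"
    proof (cases "0 - b = 0")
      case True then show ?thesis unfolding ball_S_def by blast
    next
      case False
      then have "arch_class (0 - b) \<in> value_group" unfolding value_group_def by blast
      then show ?thesis unfolding ball_S_def by blast
    qed
  qed
  then have "final_segment value_group \<and> UNIV = ball_S value_group (0::'a)"
    using final_value_group by simp
  then show ?thesis unfolding is_ball_def by blast
qed

lemma ball_single: "is_ball {d :: 'a::linordered_field}"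
proof -
  have "final_segment ({} :: 'a set set)" by (simp add: final_segment_def)
  moreover have "ball_S {} d = {d}" by (auto simp: ball_S_def)
  ultimately show ?thesis unfolding is_ball_def by blast
qed

lemma nonball:
  fixes C :: "'a::linordered_field cut"
  assumes C: "C \<in> cuts" and nb: "\<not> ball_cut C"
  shows "fst C \<noteq> {}" "snd C \<noteq> {}" "\<And>d. d \<in> fst C \<Longrightarrow> \<exists>d'\<in>fst C. d < d'"
    "\<And>e. e \<in> snd C \<Longrightarrow> \<exists>e'\<in>snd C. e' < e"
proof -
  obtain D E where CDE: "C = (D, E)" by (cases C)
  have lt: "\<And>d e. d \<in> D \<Longrightarrow> e \<in> E \<Longrightarrow> d < e" and un: "D \<union> E = UNIV"
    using C CDE by (auto simp: cuts_def)
  show "fst C \<noteq> {}"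
  proof
    assume "fst C = {}"
    then have "C = lower_cut UNIV" using CDE un by (auto simp: lower_cut_def Let_def)
    then show False using nb ball_UNIV unfolding ball_cut_def by blast
  qed
  show "snd C \<noteq> {}"
  proof
    assume "snd C = {}"
    then have "C = upper_cut UNIV" using CDE un by (auto simp: upper_cut_def Let_def)
    then show False using nb ball_UNIV unfolding ball_cut_def by blast
  qed
  fix d assume d: "d \<in> fst C"
  show "\<exists>d'\<in>fst C. d < d'"
  proof (rule ccontr)
    assume "\<not> ?thesis"
    then have m: "\<And>x. x \<in> D \<Longrightarrow> x \<le> d" using CDE by force
    have "D = {x. x \<le> d}"
    proof
      show "D \<subseteq> {x. x \<le> d}" using m by auto
      show "{x. x \<le> d} \<subseteq> D"
      proof
        fix x assume "x \<in> {x. x \<le> d}"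
        then show "x \<in> D" using lt[of d x] d CDE un by force
      qed
    qed
    then have "C = upper_cut {d}" using CDE un lt by (auto simp: upper_cut_def Let_def)
    then show False using nb ball_single unfolding ball_cut_def by blast
  qed
next
  obtain D E where CDE: "C = (D, E)" by (cases C)
  have lt: "\<And>d e. d \<in> D \<Longrightarrow> e \<in> E \<Longrightarrow> d < e" and un: "D \<union> E = UNIV"
    using C CDE by (auto simp: cuts_def)
  fix e assume e: "e \<in> snd C"
  show "\<exists>e'\<in>snd C. e' < e"
  proof (rule ccontr)
    assume "\<not> ?thesis"
    then have m: "\<And>x. x \<in> E \<Longrightarrow> e \<le> x" using CDE by force
    have "E = {x. e \<le> x}"
    proof
      show "E \<subseteq> {x. e \<le> x}" using m by auto
      show "{x. e \<le> x} \<subseteq> E"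
      proof
        fix x assume "x \<in> {x. e \<le> x}"
        then show "x \<in> E" using lt[of x e] e CDE un by force
      qed
    qed
    then have "C = lower_cut {e}" using CDE un lt by (auto simp: lower_cut_def Let_def)
    then show False using nb ball_single unfolding ball_cut_def by blast
  qed
qed

theorem proposition4p7:
  fixes i :: "'r::linordered_field \<Rightarrow> 'f::linordered_field"
  assumes "ordered_field_embedding i"
    and "\<exists>C \<in> cuts. \<not> ball_cut C \<and> filled_in i C"
  shows "\<not> (\<exists>\<iota>. inj_on \<iota> (cuts :: 'r cut set)
              \<and> continuous_map (cut_topology :: 'r cut topology) (cut_topology :: 'f cut topology) \<iota>
              \<and> (\<forall>C \<in> cuts. restrict_cut i (\<iota> C) = C))"
proof
  assume "\<exists>\<iota>. inj_on \<iota> (cuts :: 'r cut set)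
              \<and> continuous_map (cut_topology :: 'r cut topology) (cut_topology :: 'f cut topology) \<iota>
              \<and> (\<forall>C \<in> cuts. restrict_cut i (\<iota> C) = C)"
  then obtain f :: "'r cut \<Rightarrow> 'f cut" where cont: "continuous_map cut_topology cut_topology f"
    and res: "\<And>C. C \<in> cuts \<Longrightarrow> restrict_cut i (f C) = C" by blast
  obtain C :: "'r cut" where C: "C \<in> cuts" "\<not> ball_cut C" "filled_in i C" using assms(2) by blast
  then obtain a where aD: "\<And>d. d \<in> fst C \<Longrightarrow> i d < a" and aE: "\<And>e. e \<in> snd C \<Longrightarrow> a < i e"
    unfolding filled_in_def by blast
  have fc: "\<And>C. C \<in> cuts \<Longrightarrow> f C \<in> cuts"
    using continuous_map_image_subset_topspace[OF cont] by (auto simp: topspace_cut)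
  have resf: "\<And>C x. C \<in> cuts \<Longrightarrow> i x \<in> fst (f C) \<longleftrightarrow> x \<in> fst C"
    "\<And>C x. C \<in> cuts \<Longrightarrow> i x \<in> snd (f C) \<longleftrightarrow> x \<in> snd C"
    using res unfolding restrict_cut_def by (metis fst_conv vimage_eq, metis snd_conv vimage_eq)
  have pre: "\<And>U :: 'f cut set. openin cut_topology U \<Longrightarrow> generate_topology_on cbasis {x \<in> cuts. f x \<in> U}"
  proof -
    fix U :: "'f cut set" assume "openin cut_topology U"
    then have "openin cut_topology {x \<in> topspace cut_topology. f x \<in> U}"
      by (rule openin_continuous_map_preimage[OF cont])
    then have "openin cut_topology {x \<in> cuts. f x \<in> U}"
      by (simp only: topspace_cut)
    then have "openin (topology_generated_by cbasis) {x \<in> cuts. f x \<in> U}"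
      by (simp only: cut_topology_eq)
    then show "generate_topology_on cbasis {x \<in> cuts. f x \<in> U}"
      by (rule openin_topology_generated_by)
  qed
  have fC: "f C \<in> cuts" using fc C by blast
  show False
  proof (cases "\<forall>p \<in> fst (f C). p < a")
    case True
    define A where "A = ({x. x \<le> a}, {x. a < x})"
    have Ac: "A \<in> cuts" by (auto simp: A_def cuts_def)
    define U where "U = {C' \<in> cuts. cut_less C' A}"
    have "openin cut_topology U" unfolding cut_topology_eq U_def
      by (rule topology_generated_by_Basis, rule basis_lt[OF Ac])
    then have g: "generate_topology_on cbasis {x \<in> cuts. f x \<in> U}" by (rule pre)
    have s1: "fst (f C) \<subseteq> {x. x \<le> a}" using True by auto
    have s2: "a \<notin> fst (f C)" using True by auto
    have "cut_less (f C) A" unfolding cut_less_def A_def fst_conv using s1 s2 by blast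
    then have "C \<in> {x \<in> cuts. f x \<in> U}"
      using fC C by (auto simp: U_def)
    from gen_right[OF g this nonball(2)[OF C(1,2)]] obtain C2 where
      C2: "C2 \<in> cuts" "cut_less C C2" "\<And>C'. C' \<in> cuts \<Longrightarrow> cut_less C C' \<Longrightarrow> cut_less C' C2 \<Longrightarrow> f C' \<in> U"
      by blast
    obtain e where e: "e \<in> fst C2" "e \<in> snd C" using C2 C(1) cut_cover unfolding cut_less_def by blast
    obtain e' where e': "e' \<in> snd C" "e' < e" using nonball(4)[OF C(1,2) e(2)] by blast
    define C' where "C' = ({x. x \<le> e'}, {x. e' < x})"
    have C'c: "C' \<in> cuts" by (auto simp: C'_def cuts_def)
    have "cut_less C C'"
    proof -
      have "fst C \<subseteq> fst C'" using cut_lt[OF C(1) _ e'(1)] by (force simp: C'_def)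
      moreover have "e' \<notin> fst C" using cut_disj[OF C(1)] e'(1) by blast
      ultimately show ?thesis by (auto simp: cut_less_def C'_def)
    qed
    moreover have "cut_less C' C2"
    proof -
      have "fst C' \<subseteq> fst C2"
      proof
        fix x assume "x \<in> fst C'"
        then have "x < e" using e' by (auto simp: C'_def)
        then show "x \<in> fst C2" using cut_lt[OF C2(1) e(1)] cut_cover[OF C2(1)] by force
      qed
      moreover have "e \<notin> fst C'" using e' by (auto simp: C'_def)
      ultimately show ?thesis using e by (auto simp: cut_less_def)
    qed
    ultimately have "f C' \<in> U" using C2 C'c by blast
    then have "fst (f C') \<subseteq> {x. x \<le> a}" by (auto simp: U_def cut_less_def A_def)
    moreover have "i e' \<in> fst (f C')" using resf(1)[OF C'c] by (simp add: C'_def)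
    ultimately have "i e' \<le> a" by blast
    then show False using aE[OF e'(1)] by simp
  next
    case False
    then obtain p where p: "p \<in> fst (f C)" "a \<le> p" by force
    define A where "A = ({x. x < a}, {x. a \<le> x})"
    have Ac: "A \<in> cuts" by (auto simp: A_def cuts_def)
    define U where "U = {C' \<in> cuts. cut_less A C'}"
    have "openin cut_topology U" unfolding cut_topology_eq U_def
      by (rule topology_generated_by_Basis, rule basis_gt[OF Ac])
    then have g: "generate_topology_on cbasis {x \<in> cuts. f x \<in> U}" by (rule pre)
    have "{x. x < a} \<subseteq> fst (f C)"
    proof
      fix x assume "x \<in> {x. x < a}"
      then have "x < p" using p by auto
      then show "x \<in> fst (f C)" using cut_lt[OF fC p(1)] cut_cover[OF fC] by force
    qed
    moreover have "p \<notin> {x. x < a}" using p by auto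
    ultimately have "cut_less A (f C)" unfolding cut_less_def A_def fst_conv
      using p(1) by blast
    then have "C \<in> {x \<in> cuts. f x \<in> U}"
      using fC C by (auto simp: U_def)
    from gen_left[OF g this nonball(1)[OF C(1,2)]] obtain C1 where
      C1: "C1 \<in> cuts" "cut_less C1 C" "\<And>C'. C' \<in> cuts \<Longrightarrow> cut_less C1 C' \<Longrightarrow> cut_less C' C \<Longrightarrow> f C' \<in> U"
      by blast
    obtain d where d: "d \<in> fst C" "d \<notin> fst C1" using C1 unfolding cut_less_def by blast
    then have d1: "d \<in> snd C1" using cut_cover[OF C1(1)] by blast
    obtain d' where d': "d' \<in> fst C" "d < d'" using nonball(3)[OF C(1,2) d(1)] by blast
    define C' where "C' = ({x. x \<le> d}, {x. d < x})"
    have C'c: "C' \<in> cuts" by (auto simp: C'_def cuts_def)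
    have "cut_less C1 C'"
    proof -
      have "fst C1 \<subseteq> fst C'" using cut_lt[OF C1(1) _ d1] by (force simp: C'_def)
      moreover have "d \<notin> fst C1" using d by blast
      ultimately show ?thesis by (auto simp: cut_less_def C'_def)
    qed
    moreover have "cut_less C' C"
    proof -
      have "fst C' \<subseteq> fst C"
      proof
        fix x assume "x \<in> fst C'"
        then have "x < d'" using d' by (auto simp: C'_def)
        then show "x \<in> fst C" using cut_lt[OF C(1) d'(1)] cut_cover[OF C(1)] by force
      qed
      moreover have "d' \<notin> fst C'" using d' by (auto simp: C'_def)
      ultimately show ?thesis using d' by (auto simp: cut_less_def)
    qed
    ultimately have "f C' \<in> U" using C1 C'c by blast
    then have "{x. x < a} \<subseteq> fst (f C')" by (auto simp: U_def cut_less_def A_def)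
    moreover have "i d' \<in> snd (f C')" using resf(2)[OF C'c] d' by (simp add: C'_def)
    moreover have "i d' \<in> {x. x < a}" using aD[OF d'(1)] by simp
    ultimately show False using cut_disj[OF fc[OF C'c], of "i d'"] by (meson subsetD)
  qed
qed

end
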